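(* For every $\epsilon>0$, every connected graph admits a proper straight-line drawing with spanning ratio smaller than $1+\epsilon$.
   Context: A straight-line drawing maps vertices to distinct points of the plane and edges to straight-line segments between their end-vertices; it is proper if no edge contains a vertex other than its end-vertices. In a straight-line drawing $\Gamma$, $\pi_\Gamma(u,v)$ is the minimum total Euclidean length of a path between $u$ and $v$, $\|uv\|_\Gamma$ is their Euclidean distance, and the spanning ratio is $\max_{u\neq v}\pi_\Gamma(u,v)/\|uv\|_\Gamma$. *)

theory Defs
  imports "HOL-Analysis.Analysis"
begin

definition simple_graph :: "'a set \<Rightarrow> ('a \<Rightarrow> 'a \<Rightarrow> bool) \<Rightarrow> bool" where
  "simple_graph V E \<longleftrightarrow> finite V \<and> (\<forall>u v. E u v \<longrightarrow> u \<in> V \<and> v \<in> V)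
     \<and> (\<forall>u v. E u v \<longrightarrow> E v u) \<and> (\<forall>u. \<not> E u u)"

definition walk :: "'a set \<Rightarrow> ('a \<Rightarrow> 'a \<Rightarrow> bool) \<Rightarrow> 'a list \<Rightarrow> bool" where
  "walk V E xs \<longleftrightarrow> xs \<noteq> [] \<and> set xs \<subseteq> V \<and> (\<forall>i. Suc i < length xs \<longrightarrow> E (xs ! i) (xs ! Suc i))"

definition connected_graph :: "'a set \<Rightarrow> ('a \<Rightarrow> 'a \<Rightarrow> bool) \<Rightarrow> bool" where
  "connected_graph V E \<longleftrightarrow> simple_graph V E \<and>
     (\<forall>u\<in>V. \<forall>v\<in>V. \<exists>xs. walk V E xs \<and> hd xs = u \<and> last xs = v)"

definition straight_line_drawing :: "'a set \<Rightarrow> ('a \<Rightarrow> real^2) \<Rightarrow> bool" where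
  "straight_line_drawing V \<Gamma> \<longleftrightarrow> inj_on \<Gamma> V"

definition proper_drawing :: "'a set \<Rightarrow> ('a \<Rightarrow> 'a \<Rightarrow> bool) \<Rightarrow> ('a \<Rightarrow> real^2) \<Rightarrow> bool" where
  "proper_drawing V E \<Gamma> \<longleftrightarrow> straight_line_drawing V \<Gamma> \<and>
     (\<forall>u v w. E u v \<and> w \<in> V \<and> w \<noteq> u \<and> w \<noteq> v \<longrightarrow> \<Gamma> w \<notin> closed_segment (\<Gamma> u) (\<Gamma> v))"

definition walk_length :: "('a \<Rightarrow> real^2) \<Rightarrow> 'a list \<Rightarrow> real" where
  "walk_length \<Gamma> xs = (\<Sum>i<length xs - 1. dist (\<Gamma> (xs ! i)) (\<Gamma> (xs ! Suc i)))"

definition path_dist :: "'a set \<Rightarrow> ('a \<Rightarrow> 'a \<Rightarrow> bool) \<Rightarrow> ('a \<Rightarrow> real^2) \<Rightarrow> 'a \<Rightarrow> 'a \<Rightarrow> real" where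
  "path_dist V E \<Gamma> u v = Inf {walk_length \<Gamma> xs | xs. walk V E xs \<and> hd xs = u \<and> last xs = v}"

definition spanning_ratio :: "'a set \<Rightarrow> ('a \<Rightarrow> 'a \<Rightarrow> bool) \<Rightarrow> ('a \<Rightarrow> real^2) \<Rightarrow> real" where
  "spanning_ratio V E \<Gamma> = Max {path_dist V E \<Gamma> u v / dist (\<Gamma> u) (\<Gamma> v) | u v. u \<in> V \<and> v \<in> V \<and> u \<noteq> v}"

end

theory Submission imports Defs begin

definition P :: "real \<Rightarrow> real^2" where "P t = vector [t, t^2]"

lemma P_norm_lower: "t^2 \<le> norm (P t)"
  using component_le_norm_cart[of "P t" 2] by (simp add: P_def)

lemma P_norm_upper: "norm (P t) \<le> \<bar>t\<bar> + t^2"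
  using norm_le_l1_cart[of "P t"] by (simp add: P_def sum_2)

lemma P_0: "P 0 = 0"
  by (simp add: P_def vec_eq_iff forall_2)

lemma P_inj: "P a = P b \<Longrightarrow> a = b"
  by (metis P_def vector_2(1))

lemma P_seg:
  assumes "c \<noteq> a" "c \<noteq> b" shows "P c \<notin> closed_segment (P a) (P b)"
proof
  assume "P c \<in> closed_segment (P a) (P b)"
  then obtain s where s: "0 \<le> s" "s \<le> 1" "P c = (1 - s) *\<^sub>R P a + s *\<^sub>R P b"
    by (auto simp: in_segment)
  have 1: "c = (1 - s) * a + s * b" using arg_cong[OF s(3), of "\<lambda>x. x $ 1"] by (simp add: P_def)
  have 2: "c^2 = (1 - s) * a^2 + s * b^2" using arg_cong[OF s(3), of "\<lambda>x. x $ 2"] by (simp add: P_def)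
  have id: "s * (1 - s) * (a - b)^2 = (1 - s) * a^2 + s * b^2 - ((1 - s) * a + s * b)^2"
    by (simp add: power2_eq_square algebra_simps)
  have "s * (1 - s) * (a - b)^2 = 0" using 1 2 id by simp
  then have "s = 0 \<or> s = 1 \<or> a = b" by auto
  then show False using 1 assms by (auto simp: algebra_simps)
qed

definition WB :: "'a set \<Rightarrow> ('a \<Rightarrow> 'a \<Rightarrow> bool) \<Rightarrow> ('a \<Rightarrow> real^2) \<Rightarrow> 'a \<Rightarrow> 'a \<Rightarrow> real \<Rightarrow> bool" where
  "WB V E \<Gamma> u v L \<longleftrightarrow> (\<exists>xs. walk V E xs \<and> hd xs = u \<and> last xs = v \<and> walk_length \<Gamma> xs \<le> L)"

lemma walk_length_single: "walk_length \<Gamma> [x] = 0"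
  by (simp add: walk_length_def)

lemma walk_length_Cons2: "walk_length \<Gamma> (x # y # ys) = dist (\<Gamma> x) (\<Gamma> y) + walk_length \<Gamma> (y # ys)"
proof -
  have "length (x#y#ys) - 1 = Suc (length ys)" by simp
  then show ?thesis unfolding walk_length_def by (simp only: sum.lessThan_Suc_shift) simp
qed

lemma walk_length_Cons: "xs \<noteq> [] \<Longrightarrow> walk_length \<Gamma> (x # xs) = dist (\<Gamma> x) (\<Gamma> (hd xs)) + walk_length \<Gamma> xs"
  by (cases xs) (auto simp: walk_length_Cons2)

lemma walk_length_nonneg: "0 \<le> walk_length \<Gamma> xs"
  unfolding walk_length_def by (simp add: sum_nonneg)

lemma walk_Cons: "walk V E (x # xs) \<longleftrightarrow> x \<in> V \<and> (xs = [] \<or> (E x (hd xs) \<and> walk V E xs))"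
proof (cases xs)
  case Nil then show ?thesis by (simp add: walk_def)
next
  case (Cons y ys)
  show ?thesis
  proof
    assume w: "walk V E (x # xs)"
    then have "E x y" unfolding walk_def using Cons by force
    moreover have "walk V E xs" using w Cons unfolding walk_def by force
    ultimately show "x \<in> V \<and> (xs = [] \<or> (E x (hd xs) \<and> walk V E xs))" using w Cons by (simp add: walk_def)
  next
    assume h: "x \<in> V \<and> (xs = [] \<or> (E x (hd xs) \<and> walk V E xs))"
    show "walk V E (x # xs)" unfolding walk_def
    proof (intro conjI allI impI)
      show "x # xs \<noteq> []" by simp
      show "set (x # xs) \<subseteq> V" using h Cons by (auto simp: walk_def)
      fix i assume "Suc i < length (x # xs)"
      then show "E ((x # xs) ! i) ((x # xs) ! Suc i)"
        using h Cons by (cases i) (auto simp: walk_def)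
    qed
  qed
qed

lemma WB_refl: "u \<in> V \<Longrightarrow> WB V E \<Gamma> u u 0"
  unfolding WB_def by (rule exI[of _ "[u]"]) (simp add: walk_def walk_length_single)

lemma WB_mono: "WB V E \<Gamma> u v L \<Longrightarrow> L \<le> L' \<Longrightarrow> WB V E \<Gamma> u v L'"
  unfolding WB_def by force

lemma WB_step:
  assumes "simple_graph V E" "E u w" "WB V E \<Gamma> w v L"
  shows "WB V E \<Gamma> u v (dist (\<Gamma> u) (\<Gamma> w) + L)"
proof -
  obtain xs where xs: "walk V E xs" "hd xs = w" "last xs = v" "walk_length \<Gamma> xs \<le> L"
    using assms(3) unfolding WB_def by blast
  have ne: "xs \<noteq> []" using xs(1) by (simp add: walk_def)
  have "u \<in> V" using assms(1,2) by (simp add: simple_graph_def)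
  then have "walk V E (u # xs)" using xs ne assms(2) by (simp add: walk_Cons)
  moreover have "walk_length \<Gamma> (u # xs) \<le> dist (\<Gamma> u) (\<Gamma> w) + L"
    using walk_length_Cons[OF ne] xs by simp
  ultimately show ?thesis unfolding WB_def using xs ne by (intro exI[of _ "u # xs"]) simp
qed

lemma WB_trans_aux:
  assumes "simple_graph V E"
  shows "walk V E xs \<Longrightarrow> last xs = w \<Longrightarrow> WB V E \<Gamma> w v L2 \<Longrightarrow> WB V E \<Gamma> (hd xs) v (walk_length \<Gamma> xs + L2)"
proof (induction xs)
  case Nil then show ?case by (simp add: walk_def)
next
  case (Cons x xs)
  show ?case
  proof (cases "xs = []")
    case True then show ?thesis using Cons by (simp add: walk_length_single)
  next
    case False
    have "walk V E xs" "E x (hd xs)" using Cons.prems(1) False by (auto simp: walk_Cons)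
    then have "WB V E \<Gamma> (hd xs) v (walk_length \<Gamma> xs + L2)" using Cons False by simp
    from WB_step[OF assms \<open>E x (hd xs)\<close> this]
    show ?thesis using walk_length_Cons[OF False, of \<Gamma> x] by (simp add: add.assoc)
  qed
qed

lemma WB_trans:
  assumes "simple_graph V E" "WB V E \<Gamma> u w L1" "WB V E \<Gamma> w v L2"
  shows "WB V E \<Gamma> u v (L1 + L2)"
proof -
  obtain xs where xs: "walk V E xs" "hd xs = u" "last xs = w" "walk_length \<Gamma> xs \<le> L1"
    using assms(2) unfolding WB_def by blast
  from WB_trans_aux[OF assms(1) xs(1,3) assms(3)] xs(2,4) show ?thesis
    by (auto intro: WB_mono)
qed

lemma WB_sym_aux:
  assumes "simple_graph V E"
  shows "walk V E xs \<Longrightarrow> WB V E \<Gamma> (last xs) (hd xs) (walk_length \<Gamma> xs)"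
proof (induction xs)
  case Nil then show ?case by (simp add: walk_def)
next
  case (Cons x xs)
  show ?case
  proof (cases "xs = []")
    case True then show ?thesis using Cons by (simp add: walk_length_single WB_refl walk_def)
  next
    case False
    have w: "walk V E xs" "E x (hd xs)" "x \<in> V" using Cons.prems(1) False by (auto simp: walk_Cons)
    then have 1: "WB V E \<Gamma> (last xs) (hd xs) (walk_length \<Gamma> xs)" using Cons by simp
    have "E (hd xs) x" using w assms by (simp add: simple_graph_def)
    from WB_step[OF assms this WB_refl[OF w(3)]]
    have 2: "WB V E \<Gamma> (hd xs) x (dist (\<Gamma> x) (\<Gamma> (hd xs)))" by (simp add: dist_commute)
    from WB_trans[OF assms 1 2] show ?thesis
      using walk_length_Cons[OF False, of \<Gamma> x] False by (simp add: add.commute)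
  qed
qed

lemma WB_sym:
  assumes "simple_graph V E" "WB V E \<Gamma> u v L"
  shows "WB V E \<Gamma> v u L"
proof -
  obtain xs where xs: "walk V E xs" "hd xs = u" "last xs = v" "walk_length \<Gamma> xs \<le> L"
    using assms(2) unfolding WB_def by blast
  from WB_sym_aux[OF assms(1) xs(1)] xs show ?thesis by (auto intro: WB_mono)
qed

lemma path_dist_le:
  assumes "WB V E \<Gamma> u v L" shows "path_dist V E \<Gamma> u v \<le> L"
proof -
  obtain xs where xs: "walk V E xs" "hd xs = u" "last xs = v" "walk_length \<Gamma> xs \<le> L"
    using assms unfolding WB_def by blast
  show ?thesis unfolding path_dist_def
    by (rule cInf_lower2[of "walk_length \<Gamma> xs"]) (use xs walk_length_nonneg in \<open>auto intro!: bdd_belowI[of _ 0]\<close>)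
qed


definition gd :: "'a set \<Rightarrow> ('a \<Rightarrow> 'a \<Rightarrow> bool) \<Rightarrow> 'a \<Rightarrow> 'a \<Rightarrow> nat" where
  "gd V E r v = (LEAST l. \<exists>xs. walk V E xs \<and> hd xs = v \<and> last xs = r \<and> length xs = Suc l)"

lemma gd_ex:
  assumes "connected_graph V E" "v \<in> V" "r \<in> V"
  shows "\<exists>xs. walk V E xs \<and> hd xs = v \<and> last xs = r \<and> length xs = Suc (gd V E r v)"
proof -
  obtain xs where xs: "walk V E xs" "hd xs = v" "last xs = r"
    using assms unfolding connected_graph_def by blast
  then have "length xs = Suc (length xs - 1)" by (cases xs) (auto simp: walk_def)
  with xs have "\<exists>l xs. walk V E xs \<and> hd xs = v \<and> last xs = r \<and> length xs = Suc l" by blast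
  then show ?thesis unfolding gd_def by (rule LeastI_ex)
qed

lemma gd_le:
  assumes "walk V E xs" "hd xs = v" "last xs = r" "length xs = Suc l"
  shows "gd V E r v \<le> l"
  unfolding gd_def by (rule Least_le) (use assms in blast)

lemma gd_self: "r \<in> V \<Longrightarrow> gd V E r r = 0"
  using gd_le[of V E "[r]" r r 0] by (simp add: walk_def)

lemma gd_zero:
  assumes "connected_graph V E" "v \<in> V" "r \<in> V" "gd V E r v = 0"
  shows "v = r"
proof -
  obtain xs where "walk V E xs" "hd xs = v" "last xs = r" "length xs = Suc 0"
    using gd_ex[OF assms(1-3)] assms(4) by auto
  then show ?thesis by (cases xs) auto
qed

lemma gd_step:
  assumes "connected_graph V E" "v \<in> V" "r \<in> V" "v \<noteq> r"
  shows "\<exists>u. E v u \<and> gd V E r u < gd V E r v"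
proof -
  obtain xs where xs: "walk V E xs" "hd xs = v" "last xs = r" "length xs = Suc (gd V E r v)"
    using gd_ex[OF assms(1-3)] by auto
  then obtain ys where ys: "xs = v # ys" by (cases xs) (auto simp: walk_def)
  have ne: "ys \<noteq> []" using ys xs(3) assms(4) by auto
  have w: "E v (hd ys)" "walk V E ys" using xs(1) ys ne by (auto simp: walk_Cons)
  have "last ys = r" using xs(3) ys ne by simp
  moreover have "length ys = Suc (length ys - 1)" using ne by simp
  ultimately have "gd V E r (hd ys) \<le> length ys - 1" using gd_le[OF w(2)] by blast
  moreover have "length ys = gd V E r v" using xs(4) ys by simp
  ultimately show ?thesis using w ne by (intro exI[of _ "hd ys"]) (auto simp: length_greater_0_conv[symmetric])
qed

lemma arith_final:
  fixes d e :: real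
  assumes "0 < d" "d \<le> 1/4" "d \<le> e/64"
  shows "(1 + d) / (1 - d) * (1 + d) / (1 - d) < 1 + e"
proof -
  have p: "0 < 1 - d" using assms by simp
  have a: "(1 + d)^2 \<le> 1 + 2*d + d/4" using assms by (simp add: power2_eq_square algebra_simps)
  have b0: "(1 + e) * (1 - 2*d) \<le> (1 + e) * (1 - d)^2"
    using assms by (intro mult_left_mono) (auto simp: power2_eq_square algebra_simps)
  have b: "1 + e - 2*d - 2*(e*d) \<le> (1 + e) * (1 - d)^2" using b0 by (simp add: algebra_simps)
  have c: "e * d \<le> e / 4" using assms mult_left_mono[of d "1/4" e] by simp
  have "(1 + d)^2 < (1 + e) * (1 - d)^2" using a b c assms by linarith
  moreover have "(1 + d) / (1 - d) * (1 + d) / (1 - d) = (1 + d)^2 / (1 - d)^2" by (simp add: power2_eq_square)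
  moreover have "0 < (1 - d)^2" using p by simp
  ultimately show ?thesis by (simp add: pos_divide_less_eq mult.commute)
qed


theorem theorem5:
  fixes V :: "'a set" and E :: "'a \<Rightarrow> 'a \<Rightarrow> bool" and \<epsilon> :: real
  assumes "\<epsilon> > 0" and "connected_graph V E" and "card V \<ge> 2"
  shows "\<exists>\<Gamma>. proper_drawing V E \<Gamma> \<and> spanning_ratio V E \<Gamma> < 1 + \<epsilon>"
proof -
  have sg: "simple_graph V E" using assms(2) by (simp add: connected_graph_def)
  have fin: "finite V" using sg by (simp add: simple_graph_def)
  have EV: "\<And>u v. E u v \<Longrightarrow> u \<in> V \<and> v \<in> V" using sg by (simp add: simple_graph_def)
  have "V \<noteq> {}" using assms(3) by auto
  then obtain r where r: "r \<in> V" by blast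
  obtain g and N :: nat where g: "g ` V = {i. i < N}" "inj_on g V"
    using finite_imp_inj_to_nat_seg[OF fin] by blast
  have gN: "\<And>v. v \<in> V \<Longrightarrow> g v < N" using g(1) by blast
  define f where "f v = gd V E r v * N + g v" for v
  have finj: "inj_on f V"
  proof (rule inj_onI)
    fix u v assume uv: "u \<in> V" "v \<in> V" "f u = f v"
    then have "f u mod N = f v mod N" by simp
    then have "g u = g v" using gN[OF uv(1)] gN[OF uv(2)] by (simp add: f_def)
    then show "u = v" using g(2) uv by (simp add: inj_on_def)
  qed
  have fstep: "\<exists>u. E v u \<and> f u < f v" if hv: "v \<in> V" "v \<noteq> r" for v
  proof -
    obtain u where u: "E v u" "gd V E r u < gd V E r v" using gd_step[OF assms(2) hv(1) r hv(2)] by blast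
    have "f u < (gd V E r u + 1) * N" using gN EV[OF u(1)] by (simp add: f_def)
    also have "\<dots> \<le> gd V E r v * N" using u(2) by (intro mult_right_mono) auto
    also have "\<dots> \<le> f v" by (simp add: f_def)
    finally show ?thesis using u by blast
  qed
  have froot: "f r < f u" if "u \<in> V" "u \<noteq> r" for u
  proof -
    have "gd V E r u \<noteq> 0" using gd_zero[OF assms(2) that(1) r] that by blast
    then have "N \<le> gd V E r u * N" by simp
    moreover have "f r = g r" using gd_self[OF r] by (simp add: f_def)
    moreover have "gd V E r u * N \<le> f u" by (simp add: f_def)
    ultimately show ?thesis using gN[OF r] by linarith
  qed
  define \<delta> :: real where "\<delta> = min (1/4) (\<epsilon>/64)"
  have d0: "0 < \<delta>" "\<delta> \<le> 1/4" "\<delta> \<le> \<epsilon>/64" using assms(1) by (auto simp: \<delta>_def)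
  define R :: real where "R = 2 + 2 / \<delta>"
  have R1: "R \<ge> 2" using d0 by (simp add: R_def)
  have R2: "\<delta> * R^2 \<ge> 2"
  proof -
    have "\<delta> * R \<ge> 2" using d0 by (simp add: R_def field_simps)
    moreover have "R \<le> R^2" using R1 by (simp add: power2_eq_square)
    ultimately show ?thesis using mult_left_mono[of R "R^2" \<delta>] d0 by linarith
  qed
  define t where "t v = (if v = r then 0 else R ^ (f v + 1))" for v
  define \<Gamma> where "\<Gamma> v = P (t v)" for v
  define a where "a v = norm (\<Gamma> v)" for v
  have tinj: "inj_on t V"
  proof (rule inj_onI)
    fix u v assume uv: "u \<in> V" "v \<in> V" "t u = t v"
    have pos: "\<And>n. R ^ n > 0" using R1 by simp
    show "u = v"
    proof (cases "u = r \<or> v = r")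
      case True then show ?thesis using uv pos[of "f u + 1"] pos[of "f v + 1"] by (auto simp: t_def split: if_splits)
    next
      case False
      then have "R ^ (f u + 1) = R ^ (f v + 1)" using uv by (simp add: t_def)
      then have "f u = f v" using R1 power_inject_exp[of R] by simp
      then show ?thesis using finj uv by (simp add: inj_on_def)
    qed
  qed
  have proper: "proper_drawing V E \<Gamma>"
    unfolding proper_drawing_def straight_line_drawing_def
  proof (intro conjI allI impI)
    show "inj_on \<Gamma> V" using tinj P_inj by (simp add: inj_on_def \<Gamma>_def)
    fix u v w assume h: "E u v \<and> w \<in> V \<and> w \<noteq> u \<and> w \<noteq> v"
    then have "t w \<noteq> t u" "t w \<noteq> t v" using tinj EV by (auto simp: inj_on_def)
    then show "\<Gamma> w \<notin> closed_segment (\<Gamma> u) (\<Gamma> v)" unfolding \<Gamma>_def by (rule P_seg)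
  qed
  have a_r: "a r = 0" by (simp add: a_def \<Gamma>_def t_def P_0)
  have a_nn: "\<And>v. 0 \<le> a v" by (simp add: a_def)
  have a_pos: "a v > 0" if "v \<noteq> r" for v
  proof -
    have "1 \<le> t v" using R1 that one_le_power[of R "f v + 1"] by (simp add: t_def)
    then have "1 \<le> (t v)^2" by (simp add: one_le_power)
    then have "0 < norm (P (t v))" using P_norm_lower[of "t v"] by linarith
    then show ?thesis by (simp only: a_def \<Gamma>_def)
  qed
  have key: "a u \<le> \<delta> * a v" if "u \<in> V" "v \<in> V" "f u < f v" for u v
  proof (cases "u = r")
    case True then show ?thesis using a_r a_nn d0 by simp
  next
    case False
    then have vr: "v \<noteq> r" using froot[OF that(1)] that by auto
    define m where "m = R ^ f v"
    have m1: "1 \<le> m" using R1 by (simp add: m_def one_le_power)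
    have tu1: "1 \<le> t u" using R1 False one_le_power[of R "f u + 1"] by (simp add: t_def)
    have tum: "t u \<le> m" using False R1 that(3) power_increasing[of "f u + 1" "f v" R] by (simp add: t_def m_def)
    have tv: "t v = R * m" using vr by (simp add: t_def m_def)
    have "a u \<le> t u + (t u)^2" using P_norm_upper[of "t u"] tu1 by (simp add: a_def \<Gamma>_def)
    also have "\<dots> \<le> 2 * m^2"
    proof -
      have "1 * t u \<le> t u * t u" using tu1 by (intro mult_right_mono) auto
      moreover have "(t u)^2 \<le> m^2" using tu1 tum by (intro power_mono) auto
      ultimately show ?thesis by (simp add: power2_eq_square)
    qed
    also have "\<dots> \<le> \<delta> * R^2 * m^2" using R2 by (intro mult_right_mono) auto
    also have "\<dots> = \<delta> * (t v)^2" by (simp add: tv power_mult_distrib)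
    also have "\<dots> \<le> \<delta> * a v" using P_norm_lower[of "t v"] d0 by (simp add: a_def \<Gamma>_def)
    finally show ?thesis .
  qed
  define C where "C = (1 + \<delta>) / (1 - \<delta>)"
  have Ceq: "1 + (1 + C) * \<delta> = C" using d0 by (simp add: C_def field_simps)
  have C0: "0 \<le> C" using d0 by (simp add: C_def)
  have chain: "\<forall>v. v \<in> V \<longrightarrow> f v = n \<longrightarrow> WB V E \<Gamma> v r (C * a v)" for n
  proof (induction n rule: less_induct)
    case (less n)
    show ?case
    proof (intro allI impI)
      fix v assume v: "v \<in> V" "f v = n"
      show "WB V E \<Gamma> v r (C * a v)"
      proof (cases "v = r")
        case True then show ?thesis using WB_refl[OF r] a_r by simp
      next
        case False
        obtain u where u: "E v u" "f u < f v" using fstep[OF v(1) False] by blast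
        have uV: "u \<in> V" using EV[OF u(1)] by simp
        have "WB V E \<Gamma> u r (C * a u)" using less.IH u(2) v(2) uV by blast
        from WB_step[OF sg u(1) this]
        have 1: "WB V E \<Gamma> v r (dist (\<Gamma> v) (\<Gamma> u) + C * a u)" .
        have "dist (\<Gamma> v) (\<Gamma> u) \<le> a v + a u" unfolding a_def dist_norm by (rule norm_triangle_ineq4)
        moreover have "(1 + C) * a u \<le> (1 + C) * (\<delta> * a v)" using key[OF uV v(1) u(2)] C0 by (intro mult_left_mono) auto
        moreover have "a v + (1 + C) * (\<delta> * a v) = C * a v" 
        proof -
          have h: "(1 + (1 + C) * \<delta>) * a v = a v + (1 + C) * (\<delta> * a v)" by (simp add: algebra_simps)
          show ?thesis using h unfolding Ceq by simp
        qed
        ultimately have "dist (\<Gamma> v) (\<Gamma> u) + C * a u \<le> C * a v"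
          unfolding distrib_right mult_1_left by linarith
        then show ?thesis by (rule WB_mono[OF 1])
      qed
    qed
  qed
  have chainv: "\<And>v. v \<in> V \<Longrightarrow> WB V E \<Gamma> v r (C * a v)" using chain by blast
  define K where "K = C * (1 + \<delta>) / (1 - \<delta>)"
  have K: "K < 1 + \<epsilon>" unfolding K_def C_def using arith_final[OF d0] by simp
  have pair: "path_dist V E \<Gamma> u v / dist (\<Gamma> u) (\<Gamma> v) \<le> K \<and> path_dist V E \<Gamma> v u / dist (\<Gamma> v) (\<Gamma> u) \<le> K"
    if "u \<in> V" "v \<in> V" "f u < f v" for u v
  proof -
    have vr: "v \<noteq> r" using froot[OF that(1)] that by (metis less_asym)
    have W: "WB V E \<Gamma> v u (C * a v + C * a u)"
      using WB_trans[OF sg chainv[OF that(2)] WB_sym[OF sg chainv[OF that(1)]]] .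
    have pd: "path_dist V E \<Gamma> v u \<le> C * (1 + \<delta>) * a v" "path_dist V E \<Gamma> u v \<le> C * (1 + \<delta>) * a v"
    proof -
      have "C * a v + C * a u \<le> C * (1 + \<delta>) * a v"
        using mult_left_mono[OF key[OF that] C0] by (simp add: algebra_simps)
      then show "path_dist V E \<Gamma> v u \<le> C * (1 + \<delta>) * a v" "path_dist V E \<Gamma> u v \<le> C * (1 + \<delta>) * a v"
        using path_dist_le[OF W] path_dist_le[OF WB_sym[OF sg W]] by linarith+
    qed
    have D: "(1 - \<delta>) * a v \<le> dist (\<Gamma> u) (\<Gamma> v)"
    proof -
      have "a v - a u \<le> dist (\<Gamma> u) (\<Gamma> v)" unfolding a_def dist_norm
        by (metis norm_minus_commute norm_triangle_ineq2)
      then show ?thesis using key[OF that] by (simp add: algebra_simps)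
    qed
    have Dpos: "0 < (1 - \<delta>) * a v" using a_pos[OF vr] d0 by simp
    have eq: "C * (1 + \<delta>) * a v = K * ((1 - \<delta>) * a v)" using d0 by (simp add: K_def field_simps)
    have K0: "0 \<le> K" using C0 d0 by (simp add: K_def)
    have "path_dist V E \<Gamma> u v \<le> K * dist (\<Gamma> u) (\<Gamma> v)" "path_dist V E \<Gamma> v u \<le> K * dist (\<Gamma> u) (\<Gamma> v)"
      using pd eq mult_left_mono[OF D K0] by linarith+
    moreover have "0 < dist (\<Gamma> u) (\<Gamma> v)" using D Dpos by linarith
    ultimately show ?thesis by (simp add: divide_le_eq dist_commute)
  qed
  let ?S = "{path_dist V E \<Gamma> u v / dist (\<Gamma> u) (\<Gamma> v) | u v. u \<in> V \<and> v \<in> V \<and> u \<noteq> v}"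
  have Sfin: "finite ?S"
  proof -
    have "?S \<subseteq> (\<lambda>(u, v). path_dist V E \<Gamma> u v / dist (\<Gamma> u) (\<Gamma> v)) ` (V \<times> V)" by auto
    then show ?thesis using fin by (meson finite_SigmaI finite_imageI finite_subset)
  qed
  have "V \<noteq> {r}" using assms(3) by auto
  then obtain w where w: "w \<in> V" "w \<noteq> r" using r by blast
  then have Sne: "?S \<noteq> {}" using r by blast
  have "\<forall>x\<in>?S. x < 1 + \<epsilon>"
  proof
    fix x assume "x \<in> ?S"
    then obtain u v where uv: "x = path_dist V E \<Gamma> u v / dist (\<Gamma> u) (\<Gamma> v)" "u \<in> V" "v \<in> V" "u \<noteq> v" by blast
    have "f u \<noteq> f v" using finj uv by (auto simp: inj_on_def)
    then have "f u < f v \<or> f v < f u" by auto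
    then have "x \<le> K" using pair uv by blast
    then show "x < 1 + \<epsilon>" using K by simp
  qed
  then have "spanning_ratio V E \<Gamma> < 1 + \<epsilon>" unfolding spanning_ratio_def using Max_less_iff[OF Sfin Sne] by blast
  then show ?thesis using proper by blast
qed

end
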